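(* Let $N\ge1$, $K_{des}>0$, and let $\Omega_P,\Omega_S\subset[0,\pi]$ be disjoint nonempty closed sets, each a finite union of closed intervals of positive length. With $\Delta_{P,res}(K)$ as defined below, and $$\Delta_P(K)=\frac{8K_{des}^2K}{K^2+16K_{des}^4-8K_{des}^2},$$ there exists exactly one $K\ge 4K_{des}(K_{des}+1)$ such that $\Delta_{P,res}(K)=\Delta_P(K)$. Moreover, on $[4K_{des}(K_{des}+1),\infty)$ one has $\Delta_{P,res}(K)<\Delta_P(K)$ for $K$ smaller than this value and $\Delta_{P,res}(K)>\Delta_P(K)$ for $K$ larger than it.
   Context: Let $D(\omega)=1$ on $\Omega_P$ and $D(\omega)=0$ on $\Omega_S$. For $K>0$ let $W_K(\omega)=1$ on $\Omega_P$ and $W_K(\omega)=K$ on $\Omega_S$, and $$\Delta_{P,res}(K)=\min_{c_0,\dots,c_N\in\mathbb{R}}\ \max_{\omega\in\Omega_P\cup\Omega_S}\Bigl|W_K(\omega)\Bigl(\sum_{n=0}^N c_n\cos(n\omega)-D(\omega)\Bigr)\Bigr|,$$ the minimax weighted error of the optimal even-symmetric (zero-phase) sequence of order $2N$ approximating $D$ with weight $W_K$. *)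

theory Defs
  imports "HOL-Analysis.Analysis"
begin

definition band_set :: "real set \<Rightarrow> bool" where
  "band_set \<Omega> \<longleftrightarrow> \<Omega> \<subseteq> {0..pi} \<and>
     (\<exists>I :: (real \<times> real) set. finite I \<and> I \<noteq> {} \<and> (\<forall>(a,b)\<in>I. a < b) \<and>
        \<Omega> = (\<Union>(a,b)\<in>I. {a..b}))"

definition Dresp :: "real set \<Rightarrow> real \<Rightarrow> real" where
  "Dresp \<Omega>P \<omega> = (if \<omega> \<in> \<Omega>P then 1 else 0)"

definition Wweight :: "real set \<Rightarrow> real \<Rightarrow> real \<Rightarrow> real" where
  "Wweight \<Omega>P K \<omega> = (if \<omega> \<in> \<Omega>P then 1 else K)"

definition DeltaPres :: "nat \<Rightarrow> real set \<Rightarrow> real set \<Rightarrow> real \<Rightarrow> real" where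
  "DeltaPres N \<Omega>P \<Omega>S K =
     (INF c :: nat \<Rightarrow> real. SUP \<omega> \<in> \<Omega>P \<union> \<Omega>S.
        \<bar>Wweight \<Omega>P K \<omega> * ((\<Sum>n\<le>N. c n * cos (real n * \<omega>)) - Dresp \<Omega>P \<omega>)\<bar>)"

definition DeltaP :: "real \<Rightarrow> real \<Rightarrow> real" where
  "DeltaP Kdes K = 8 * Kdes^2 * K / (K^2 + 16 * Kdes^4 - 8 * Kdes^2)"

end

theory Submission
  imports Defs "HOL-Computational_Algebra.Polynomial"
begin

fun cheb :: "nat \<Rightarrow> real poly" where
  "cheb 0 = 1"
| "cheb (Suc 0) = [:0,1:]"
| "cheb (Suc (Suc n)) = [:0,2:] * cheb (Suc n) - cheb n"

lemma cheb_degree: "degree (cheb n) \<le> n"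
proof (induction n rule: cheb.induct)
  case (3 n)
  have "degree ([:0,2:] * cheb (Suc n)) \<le> Suc (Suc n)"
    using 3(1) degree_mult_le[of "[:0,2::real:]" "cheb (Suc n)"] by simp
  moreover have "degree (cheb n) \<le> Suc (Suc n)" using 3(2) by simp
  ultimately show ?case by (simp add: degree_diff_le)
qed auto

lemma cheb_cos: "poly (cheb n) (cos x) = cos (real n * x)"
proof (induction n rule: cheb.induct)
  case (3 n)
  have e: "cos (real (Suc (Suc n)) * x) = 2 * cos x * cos (real (Suc n) * x) - cos (real n * x)"
  proof -
    have a: "real (Suc (Suc n)) * x = real (Suc n) * x + x" by (simp add: algebra_simps)
    have b: "real n * x = real (Suc n) * x - x" by (simp add: algebra_simps)
    show ?thesis unfolding a b cos_add cos_diff by simp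
  qed
  have "poly (cheb (Suc (Suc n))) (cos x) = 2 * cos x * poly (cheb (Suc n)) (cos x) - poly (cheb n) (cos x)"
    by simp
  also have "\<dots> = 2 * cos x * cos (real (Suc n) * x) - cos (real n * x)" by (simp only: 3)
  finally show ?case using e by simp
qed auto

lemma interp:
  fixes T :: "real set" and Q :: "real poly"
  assumes T: "finite T" "card T = Suc N" and dQ: "degree Q \<le> N"
  shows "poly Q x = (\<Sum>t\<in>T. poly Q t * ((\<Prod>u\<in>T-{t}. x - u) / (\<Prod>u\<in>T-{t}. t - u)))"
proof -
  define L where "L t = smult (1 / (\<Prod>u\<in>T-{t}. t - u)) (\<Prod>u\<in>T-{t}. [:-u,1:])" for t
  define R where "R = Q - (\<Sum>t\<in>T. smult (poly Q t) (L t))"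
  have polyL: "poly (L t) y = (\<Prod>u\<in>T-{t}. y - u) / (\<Prod>u\<in>T-{t}. t - u)" for t y
    by (simp add: L_def poly_prod)
  have degL: "degree (L t) \<le> N" if "t \<in> T" for t
  proof -
    have "degree (\<Prod>u\<in>T-{t}. [:-u,1::real:]) \<le> (\<Sum>u\<in>T-{t}. degree [:-u,1::real:])"
      using degree_prod_sum_le[of "T-{t}" "\<lambda>u. [:-u,1::real:]"] T by (simp add: o_def)
    also have "\<dots> = card (T - {t})" by simp
    also have "\<dots> = N" using T that by simp
    finally show ?thesis by (simp add: L_def)
  qed
  have degR: "degree R \<le> N"
    unfolding R_def
    by (rule order.trans[OF degree_diff_le_max]) (auto intro!: degree_sum_le T order.trans[OF degree_smult_le] degL dQ)
  have roots: "T \<subseteq> {y. poly R y = 0}"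
  proof
    fix y assume y: "y \<in> T"
    have z: "(\<Prod>u\<in>T-{t}. y - u) = 0" if "t \<in> T" "t \<noteq> y" for t
      using T y that by (intro prod_zero) auto
    have nz: "(\<Prod>u\<in>T-{y}. y - u) \<noteq> 0" using T by auto
    have "(\<Sum>t\<in>T. poly Q t * poly (L t) y) = poly Q y * poly (L y) y"
      by (rule sum.remove[OF T(1) y, THEN trans]) (auto simp: polyL z intro!: sum.neutral)
    also have "\<dots> = poly Q y" using nz by (simp add: polyL)
    finally show "y \<in> {y. poly R y = 0}" by (simp add: R_def poly_sum)
  qed
  have "R = 0"
  proof (rule ccontr)
    assume "R \<noteq> 0"
    hence "card {y. poly R y = 0} \<le> N" using card_poly_roots_bound[of R] degR by linarith
    moreover have "card T \<le> card {y. poly R y = 0}"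
      using card_mono[OF poly_roots_finite[OF \<open>R \<noteq> 0\<close>] roots] .
    ultimately show False using T by simp
  qed
  hence "poly R x = 0" by simp
  thus ?thesis by (simp add: R_def poly_sum polyL)
qed

definition errf :: "nat \<Rightarrow> real set \<Rightarrow> real \<Rightarrow> (nat \<Rightarrow> real) \<Rightarrow> real \<Rightarrow> real" where
  "errf N P K c \<omega> = \<bar>Wweight P K \<omega> * ((\<Sum>n\<le>N. c n * cos (real n * \<omega>)) - Dresp P \<omega>)\<bar>"

definition supf :: "nat \<Rightarrow> real set \<Rightarrow> real set \<Rightarrow> real \<Rightarrow> (nat \<Rightarrow> real) \<Rightarrow> real" where
  "supf N P S K c = (SUP \<omega>\<in>P \<union> S. errf N P K c \<omega>)"

lemma DeltaPres_alt: "DeltaPres N P S K = (INF c. supf N P S K c)"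
  by (simp add: DeltaPres_def supf_def errf_def)

lemma abs_cospoly: "\<bar>\<Sum>n\<le>N. c n * cos (real n * \<omega>)\<bar> \<le> (\<Sum>n\<le>N. \<bar>c n\<bar>)"
proof -
  have "\<bar>\<Sum>n\<le>N. c n * cos (real n * \<omega>)\<bar> \<le> (\<Sum>n\<le>N. \<bar>c n * cos (real n * \<omega>)\<bar>)"
    by (rule sum_abs)
  also have "\<dots> \<le> (\<Sum>n\<le>N. \<bar>c n\<bar>)"
    by (intro sum_mono) (simp add: abs_mult mult_left_le)
  finally show ?thesis .
qed

lemma errf_bdd: "errf N P K c \<omega> \<le> max 1 \<bar>K\<bar> * ((\<Sum>n\<le>N. \<bar>c n\<bar>) + 1)"
proof -
  have w: "\<bar>Wweight P K \<omega>\<bar> \<le> max 1 \<bar>K\<bar>" by (simp add: Wweight_def)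
  have d: "\<bar>(\<Sum>n\<le>N. c n * cos (real n * \<omega>)) - Dresp P \<omega>\<bar> \<le> (\<Sum>n\<le>N. \<bar>c n\<bar>) + 1"
    using abs_cospoly[where N=N and c=c and \<omega>=\<omega>] by (auto simp: Dresp_def)
  show ?thesis unfolding errf_def abs_mult
    by (rule mult_mono[OF w d]) auto
qed

lemma errf_bdd_above: "bdd_above (errf N P K c ` A)"
  using errf_bdd by (intro bdd_aboveI2) blast

lemma supf_ge: "\<omega> \<in> P \<union> S \<Longrightarrow> errf N P K c \<omega> \<le> supf N P S K c"
  unfolding supf_def by (rule cSUP_upper[OF _ errf_bdd_above])

lemma supf_nonneg: "P \<union> S \<noteq> {} \<Longrightarrow> 0 \<le> supf N P S K c"
proof -
  assume "P \<union> S \<noteq> {}"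
  then obtain \<omega> where "\<omega> \<in> P \<union> S" by blast
  from supf_ge[OF this] show ?thesis by (smt (verit) errf_def abs_ge_zero)
qed

lemma supf_bdd_below: "P \<union> S \<noteq> {} \<Longrightarrow> bdd_below (range (supf N P S K))"
  using supf_nonneg by (intro bdd_belowI2) blast

lemma DP_nonneg: "P \<union> S \<noteq> {} \<Longrightarrow> 0 \<le> DeltaPres N P S K"
  unfolding DeltaPres_alt by (rule cINF_greatest) (auto intro: supf_nonneg)

lemma DP_le: "P \<union> S \<noteq> {} \<Longrightarrow> DeltaPres N P S K \<le> supf N P S K c"
  unfolding DeltaPres_alt by (rule cINF_lower[OF supf_bdd_below]) auto

lemma DP_mono:
  assumes ne: "P \<union> S \<noteq> {}" and K: "0 \<le> K" "K \<le> K'"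
  shows "DeltaPres N P S K \<le> DeltaPres N P S K'"
proof -
  have "supf N P S K c \<le> supf N P S K' c" for c
    unfolding supf_def
  proof (rule cSUP_mono[OF ne errf_bdd_above])
    fix \<omega> assume "\<omega> \<in> P \<union> S"
    have "errf N P K c \<omega> \<le> errf N P K' c \<omega>"
      unfolding errf_def abs_mult using K
      by (intro mult_right_mono) (auto simp: Wweight_def)
    thus "\<exists>m\<in>P \<union> S. errf N P K c \<omega> \<le> errf N P K' c m" using \<open>\<omega> \<in> P \<union> S\<close> by blast
  qed
  thus ?thesis unfolding DeltaPres_alt
    by (intro cINF_mono supf_bdd_below ne) auto
qed

lemma DP_scale:
  assumes ne: "P \<union> S \<noteq> {}" and K: "0 < K" "K \<le> K'"
  shows "DeltaPres N P S K' \<le> (K' / K) * DeltaPres N P S K"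
proof -
  have r: "1 \<le> K' / K" using K by simp
  have s: "supf N P S K' c \<le> (K' / K) * supf N P S K c" for c
    unfolding supf_def
  proof (rule cSUP_least[OF ne])
    fix \<omega> assume w: "\<omega> \<in> P \<union> S"
    have "errf N P K' c \<omega> \<le> (K' / K) * errf N P K c \<omega>"
    proof -
      have "\<bar>Wweight P K' \<omega>\<bar> \<le> (K' / K) * \<bar>Wweight P K \<omega>\<bar>"
        using K r by (auto simp: Wweight_def)
      thus ?thesis unfolding errf_def abs_mult
        by (metis (no_types, lifting) abs_ge_zero mult.assoc mult_right_mono)
    qed
    also have "\<dots> \<le> (K' / K) * (SUP \<omega>\<in>P \<union> S. errf N P K c \<omega>)"
      using r by (intro mult_left_mono cSUP_upper[OF w errf_bdd_above]) auto
    finally show "errf N P K' c \<omega> \<le> \<dots>" .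
  qed
  have "DeltaPres N P S K' * (K / K') \<le> DeltaPres N P S K"
    unfolding DeltaPres_alt[of N P S K]
  proof (rule cINF_greatest)
    fix c
    have "DeltaPres N P S K' \<le> (K' / K) * supf N P S K c" using DP_le[OF ne] s order.trans by blast
    thus "DeltaPres N P S K' * (K / K') \<le> supf N P S K c" using K
      by (simp add: field_simps)
  qed auto
  thus ?thesis using K by (simp add: field_simps)
qed

lemma DP_upper:
  assumes ne: "P \<union> S \<noteq> {}" and K: "0 \<le> K"
  shows "DeltaPres N P S K \<le> K / (K + 1)"
proof -
  define c where "c = (\<lambda>n::nat. if n = 0 then 1 / (K + 1) else 0)"
  have p: "(\<Sum>n\<le>N. c n * cos (real n * \<omega>)) = 1 / (K + 1)" for \<omega>
  proof -
    have "(\<Sum>n\<le>N. c n * cos (real n * \<omega>)) = (\<Sum>n\<le>N. if n = 0 then 1 / (K + 1) else 0)"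
      by (rule sum.cong) (auto simp: c_def)
    thus ?thesis by simp
  qed
  have "supf N P S K c \<le> K / (K + 1)"
    unfolding supf_def
  proof (rule cSUP_least[OF ne])
    fix \<omega>
    show "errf N P K c \<omega> \<le> K / (K + 1)"
      unfolding errf_def p using K by (auto simp: Wweight_def Dresp_def field_simps)
  qed
  thus ?thesis using DP_le[OF ne, of N K c] by linarith
qed

lemma DP_lower:
  assumes bP: "band_set P" and bS: "band_set S" and disj: "P \<inter> S = {}"
  shows "\<exists>\<delta>>0. \<forall>K\<ge>1. \<delta> \<le> DeltaPres N P S K"
proof -
  from bP obtain I where I: "P \<subseteq> {0..pi}" "I \<noteq> {}" "\<forall>(a,b)\<in>I. a < b"
      "P = (\<Union>(a,b)\<in>I. {a..b})" unfolding band_set_def by blast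
  then obtain a b where ab: "(a,b) \<in> I" by auto
  with I have ab_lt: "a < b" and abP: "{a..b} \<subseteq> P" by auto
  have ab0: "{a..b} \<subseteq> {0..pi}" using abP I(1) by blast
  from bS obtain J where J: "J \<noteq> {}" "\<forall>(a,b)\<in>J. a < b"
      "S = (\<Union>(a,b)\<in>J. {a..b})" unfolding band_set_def by blast
  then obtain a' b' where "(a',b') \<in> J" by auto
  with J have "a' \<in> S" by force
  then obtain s where sS: "s \<in> S" by blast
  have sP: "s \<notin> P" using sS disj by blast
  have ne: "P \<union> S \<noteq> {}" using sS by blast
  have inj: "inj_on cos {a..b}"
    by (rule inj_onI) (use ab0 in \<open>auto intro: cos_inj_pi\<close>)
  have "\<not> finite (cos ` {a..b})"
    using finite_image_iff[OF inj] infinite_Icc[OF ab_lt] by simp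
  then obtain T where T: "finite T" "card T = Suc N" "T \<subseteq> cos ` {a..b}"
    using infinite_arbitrarily_large by blast
  define L where "L t = (\<Prod>u\<in>T-{t}. cos s - u) / (\<Prod>u\<in>T-{t}. t - u)" for t
  define \<Lambda> where "\<Lambda> = (\<Sum>t\<in>T. \<bar>L t\<bar>)"
  have \<Lambda>0: "0 \<le> \<Lambda>" unfolding \<Lambda>_def by (intro sum_nonneg) auto
  define \<delta> where "\<delta> = 1 / (1 + \<Lambda>)"
  have \<delta>0: "\<delta> > 0" using \<Lambda>0 by (simp add: \<delta>_def)
  have main: "\<delta> \<le> supf N P S K c" if K: "K \<ge> 1" for K c
  proof -
    define E where "E = supf N P S K c"
    define Q where "Q = (\<Sum>n\<le>N. smult (c n) (cheb n))"
    have polyQ: "poly Q (cos \<omega>) = (\<Sum>n\<le>N. c n * cos (real n * \<omega>))" for \<omega>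
      by (simp add: Q_def poly_sum cheb_cos)
    have degQ: "degree Q \<le> N"
      unfolding Q_def
      by (intro degree_sum_le) (auto intro: order.trans[OF degree_smult_le] order.trans[OF cheb_degree])
    have degQ1: "degree (Q - 1) \<le> N"
      using degree_diff_le[of Q N 1] degQ by simp
    have es: "\<bar>poly Q (cos s)\<bar> \<le> E"
    proof -
      have "errf N P K c s \<le> E" unfolding E_def using sS by (intro supf_ge) auto
      moreover have "errf N P K c s = K * \<bar>poly Q (cos s)\<bar>"
        using sP K by (simp add: errf_def Wweight_def Dresp_def polyQ abs_mult)
      ultimately show ?thesis using K
        by (smt (verit, best) abs_ge_zero mult_le_cancel_right1)
    qed
    have et: "\<bar>poly Q t - 1\<bar> \<le> E" if t: "t \<in> T" for t
    proof -
      from t T obtain \<omega> where w: "\<omega> \<in> {a..b}" "t = cos \<omega>" by auto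
      hence wP: "\<omega> \<in> P" using abP by auto
      have "errf N P K c \<omega> \<le> E" unfolding E_def using wP by (intro supf_ge) auto
      moreover have "errf N P K c \<omega> = \<bar>poly Q t - 1\<bar>"
        using wP w by (simp add: errf_def Wweight_def Dresp_def polyQ)
      ultimately show ?thesis by simp
    qed
    have "poly (Q - 1) (cos s) = (\<Sum>t\<in>T. poly (Q - 1) t * L t)"
      unfolding L_def by (rule interp[OF T(1,2) degQ1])
    hence "\<bar>poly Q (cos s) - 1\<bar> = \<bar>\<Sum>t\<in>T. (poly Q t - 1) * L t\<bar>" by simp
    also have "\<dots> \<le> (\<Sum>t\<in>T. \<bar>(poly Q t - 1) * L t\<bar>)" by (rule sum_abs)
    also have "\<dots> \<le> (\<Sum>t\<in>T. E * \<bar>L t\<bar>)"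
      by (intro sum_mono) (auto simp: abs_mult intro: mult_right_mono et)
    also have "\<dots> = E * \<Lambda>" by (simp add: \<Lambda>_def sum_distrib_left)
    finally have "\<bar>poly Q (cos s) - 1\<bar> \<le> E * \<Lambda>" .
    with es have "1 \<le> E * (1 + \<Lambda>)" by (simp add: algebra_simps)
    thus ?thesis unfolding \<delta>_def E_def using \<Lambda>0 by (simp add: field_simps)
  qed
  show ?thesis
  proof (intro exI[of _ \<delta>] conjI allI impI \<delta>0)
    fix K :: real assume "1 \<le> K"
    thus "\<delta> \<le> DeltaPres N P S K" unfolding DeltaPres_alt
      by (intro cINF_greatest) (auto intro: main)
  qed
qed

lemma DP_lip:
  assumes ne: "P \<union> S \<noteq> {}" and K1: "0 < K1" "K1 \<le> x" "x \<le> y"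
  shows "\<bar>DeltaPres N P S y - DeltaPres N P S x\<bar> \<le> (y - x) / K1"
proof -
  have x0: "0 < x" using K1 by simp
  have m: "DeltaPres N P S x \<le> DeltaPres N P S y" using DP_mono[OF ne, of x y] K1 by simp
  have sc: "DeltaPres N P S y \<le> (y / x) * DeltaPres N P S x" using DP_scale[OF ne x0 K1(3)] .
  have up: "DeltaPres N P S x \<le> 1"
    using DP_upper[OF ne, of x N] x0 by (smt (verit) divide_le_eq_1)
  have nn: "0 \<le> DeltaPres N P S x" using DP_nonneg[OF ne] .
  have "DeltaPres N P S y - DeltaPres N P S x \<le> (y / x - 1) * DeltaPres N P S x"
    using sc by (simp add: algebra_simps)
  also have "\<dots> \<le> (y / x - 1) * 1"
    using up K1 x0 by (intro mult_left_mono) (auto simp: field_simps)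
  also have "\<dots> = (y - x) / x" using x0 by (simp add: field_simps)
  also have "\<dots> \<le> (y - x) / K1" using K1 by (intro divide_left_mono) auto
  finally show ?thesis using m by simp
qed

lemma DP_cont:
  assumes ne: "P \<union> S \<noteq> {}" and K1: "0 < K1"
  shows "continuous_on {K1..M} (DeltaPres N P S)"
  unfolding continuous_on_iff
proof (intro ballI allI impI)
  fix x e :: real assume x: "x \<in> {K1..M}" and e: "0 < e"
  show "\<exists>d>0. \<forall>x'\<in>{K1..M}. dist x' x < d \<longrightarrow> dist (DeltaPres N P S x') (DeltaPres N P S x) < e"
  proof (intro exI[of _ "e * K1"] conjI ballI impI)
    show "0 < e * K1" using e K1 by simp
    fix x' assume x': "x' \<in> {K1..M}" and d: "dist x' x < e * K1"
    have "\<bar>DeltaPres N P S x' - DeltaPres N P S x\<bar> \<le> \<bar>x' - x\<bar> / K1"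
    proof (cases "x \<le> x'")
      case True thus ?thesis using DP_lip[OF ne K1, of x x' N] x by auto
    next
      case False thus ?thesis using DP_lip[OF ne K1, of x' x N] x' by (auto simp: abs_minus_commute)
    qed
    also have "\<dots> < e" using d K1 by (simp add: dist_real_def field_simps)
    finally show "dist (DeltaPres N P S x') (DeltaPres N P S x) < e" by (simp add: dist_real_def)
  qed
qed

lemma DeltaP_den:
  fixes a K :: real
  assumes a: "0 < a" and K: "4 * a * (a + 1) \<le> K"
  shows "0 < K^2 + 16 * a^4 - 8 * a^2"
proof -
  have "0 \<le> 4 * a * (a + 1)" using a by simp
  hence "(4 * a * (a + 1))^2 \<le> K^2" using K by (intro power_mono) auto
  moreover have "(4 * a * (a + 1))^2 + 16 * a^4 - 8 * a^2 = 8*a^2*(2*a+1)^2"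
    by (simp add: power2_eq_square power4_eq_xxxx algebra_simps)
  moreover have "0 < 8*a^2*(2*a+1)^2" using a by simp
  ultimately show ?thesis by linarith
qed

lemma DeltaP_K1:
  assumes a: "0 < a"
  shows "DeltaP a (4 * a * (a + 1)) = (4 * a * (a + 1)) / (4 * a * (a + 1) + 1)"
proof -
  have d: "(4 * a * (a + 1))^2 + 16 * a^4 - 8 * a^2 = 8*a^2*(2*a+1)^2"
    by (simp add: power2_eq_square power4_eq_xxxx algebra_simps)
  have e: "4 * a * (a + 1) + 1 = (2*a+1)^2" by (simp add: power2_eq_square algebra_simps)
  have "DeltaP a (4 * a * (a + 1)) = 8*a^2*(4 * a * (a + 1)) / (8*a^2*(2*a+1)^2)"
    unfolding DeltaP_def d ..
  also have "\<dots> = (4 * a * (a + 1)) / (2*a+1)^2" using a by simp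
  finally show ?thesis unfolding e .
qed

lemma DeltaP_dec:
  assumes a: "0 < a" and K: "4 * a * (a + 1) \<le> x" "x < y"
  shows "DeltaP a y < DeltaP a x"
proof -
  define c where "c = 16 * a^4 - 8 * a^2"
  have dx: "0 < x^2 + c" using DeltaP_den[OF a K(1)] by (simp add: c_def)
  have dy: "0 < y^2 + c" using DeltaP_den[OF a, of y] K by (simp add: c_def)
  have x0: "0 < x" using K a by (smt (verit) mult_pos_pos)
  have "(4 * a * (a + 1))^2 \<le> x * y"
  proof -
    have "0 \<le> 4 * a * (a + 1)" using a by simp
    hence "(4 * a * (a + 1))^2 \<le> x^2" using K by (intro power_mono) auto
    also have "x^2 \<le> x * y" using K x0 by (simp add: power2_eq_square)
    finally show ?thesis .
  qed
  moreover have "c < (4 * a * (a + 1))^2"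
    using a by (simp add: c_def power2_eq_square power4_eq_xxxx algebra_simps)
       (smt (verit) mult_pos_pos zero_less_power a)
  ultimately have cxy: "c < x * y" by linarith
  have "y * (x^2 + c) < x * (y^2 + c)"
  proof -
    have "x * (y^2 + c) - y * (x^2 + c) = (y - x) * (x * y - c)"
      by (simp add: power2_eq_square algebra_simps)
    moreover have "0 < (y - x) * (x * y - c)" using K cxy by simp
    ultimately show ?thesis by linarith
  qed
  hence "y / (y^2 + c) < x / (x^2 + c)" using dx dy by (simp add: field_simps)
  hence "8 * a^2 * (y / (y^2 + c)) < 8 * a^2 * (x / (x^2 + c))" using a
    by (intro mult_strict_left_mono) auto
  moreover have "DeltaP a z = 8*a^2*(z/(z^2+c))" for z
    by (simp add: DeltaP_def c_def add_diff_eq)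
  ultimately show ?thesis by simp
qed

theorem mainTheorem3:
  fixes N :: nat and Kdes :: real and \<Omega>P \<Omega>S :: "real set"
  assumes "N \<ge> 1" and "Kdes > 0"
    and "band_set \<Omega>P" and "band_set \<Omega>S" and "\<Omega>P \<inter> \<Omega>S = {}"
  shows "(\<exists>!K. K \<ge> 4 * Kdes * (Kdes + 1) \<and> DeltaPres N \<Omega>P \<Omega>S K = DeltaP Kdes K) \<and>
    (\<forall>K0 K. K0 \<ge> 4 * Kdes * (Kdes + 1) \<and> DeltaPres N \<Omega>P \<Omega>S K0 = DeltaP Kdes K0
        \<and> K \<ge> 4 * Kdes * (Kdes + 1) \<longrightarrow>
       (K < K0 \<longrightarrow> DeltaPres N \<Omega>P \<Omega>S K < DeltaP Kdes K) \<and>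
       (K > K0 \<longrightarrow> DeltaPres N \<Omega>P \<Omega>S K > DeltaP Kdes K))"
proof -
  define a where "a = Kdes"
  define K1 where "K1 = 4 * a * (a + 1)"
  define f where "f = DeltaPres N \<Omega>P \<Omega>S"
  have a: "0 < a" using assms(2) by (simp add: a_def)
  have K1pos: "0 < K1" using a by (simp add: K1_def)
  have ne: "\<Omega>P \<union> \<Omega>S \<noteq> {}"
  proof -
    obtain I where I: "I \<noteq> {}" "\<forall>(a,b)\<in>I. a < b" "\<Omega>P = (\<Union>(a,b)\<in>I. {a..b})"
      using assms(3) unfolding band_set_def by blast
    then obtain a b where "(a,b) \<in> I" by auto
    with I have "a \<in> \<Omega>P" by force
    thus ?thesis by blast
  qed
  have mono: "f x \<le> f y" if "K1 \<le> x" "x \<le> y" for x y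
    unfolding f_def using DP_mono[OF ne, of x y] that K1pos by simp
  have dec: "DeltaP a y < DeltaP a x" if "K1 \<le> x" "x < y" for x y
    using DeltaP_dec[OF a, of x y] that by (simp add: K1_def)
  have part2: "(K < K0 \<longrightarrow> f K < DeltaP a K) \<and> (K > K0 \<longrightarrow> f K > DeltaP a K)"
    if "K0 \<ge> K1" "f K0 = DeltaP a K0" "K \<ge> K1" for K0 K
  proof (intro conjI impI)
    assume "K < K0"
    hence "f K \<le> f K0" "DeltaP a K0 < DeltaP a K" using mono[of K K0] dec[of K K0] that by auto
    thus "f K < DeltaP a K" using that by simp
  next
    assume "K > K0"
    hence "f K0 \<le> f K" "DeltaP a K < DeltaP a K0" using mono[of K0 K] dec[of K0 K] that by auto
    thus "f K > DeltaP a K" using that by simp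
  qed
  obtain \<delta> where \<delta>: "\<delta> > 0" "\<forall>K\<ge>1. \<delta> \<le> f K"
    using DP_lower[OF assms(3,4,5), of N] unfolding f_def by blast
  define M where "M = max K1 (16 * a^2 / \<delta> + 1)"
  have M1: "K1 \<le> M" "16 * a^2 / \<delta> + 1 \<le> M" by (auto simp: M_def)
  have Mge1: "1 \<le> M" using M1(2) \<delta>(1) a by (smt (verit) divide_nonneg_pos zero_le_power2)
  have fM: "\<delta> \<le> f M" using \<delta> Mge1 by auto
  have \<delta>1: "\<delta> \<le> 1"
  proof -
    have "f M \<le> M / (M + 1)" unfolding f_def using DP_upper[OF ne, of M N] Mge1 by simp
    also have "\<dots> \<le> 1" using Mge1 by simp
    finally show ?thesis using fM by simp
  qed
  have DPM: "DeltaP a M \<le> \<delta>"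
  proof -
    have den: "0 < M^2 + 16 * a^4 - 8 * a^2" using DeltaP_den[OF a, of M] M1 by (simp add: K1_def)
    have h1: "16 * a^2 + \<delta> \<le> \<delta> * M"
      using M1(2) \<delta>(1) by (simp add: field_simps)
    have h2: "(16 * a^2 + \<delta>) * M \<le> \<delta> * M * M" using h1 Mge1 by (intro mult_right_mono) auto
    have h3: "8 * a^2 * \<delta> \<le> 8 * a^2 * M" using \<delta>1 Mge1 a by (intro mult_left_mono) auto
    have h4: "0 \<le> \<delta> * (16 * a^4)" using \<delta> by simp
    have h5: "0 \<le> \<delta> * M" using \<delta> Mge1 by simp
    have "8 * a^2 * M \<le> \<delta> * (M^2 + 16 * a^4 - 8 * a^2)"
      using h2 h3 h4 h5 by (simp add: power2_eq_square algebra_simps)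
    thus ?thesis using den unfolding DeltaP_def by (simp add: divide_le_eq)
  qed
  have cont: "continuous_on {K1..M} (\<lambda>K. f K - DeltaP a K)"
  proof (intro continuous_on_diff)
    show "continuous_on {K1..M} f" unfolding f_def by (rule DP_cont[OF ne K1pos])
    have "\<forall>K\<in>{K1..M}. K^2 + 16 * a^4 - 8 * a^2 \<noteq> 0"
      using DeltaP_den[OF a] by (auto simp: K1_def) (smt (verit))
    thus "continuous_on {K1..M} (DeltaP a)" unfolding DeltaP_def
      by (intro continuous_intros) auto
  qed
  have gK1: "f K1 - DeltaP a K1 \<le> 0"
    using DP_upper[OF ne, of K1 N] K1pos DeltaP_K1[OF a] unfolding f_def K1_def by simp
  have gM: "0 \<le> f M - DeltaP a M" using fM DPM by simp
  obtain K0 where K0: "K1 \<le> K0" "K0 \<le> M" "f K0 - DeltaP a K0 = 0"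
    using IVT'[of "\<lambda>K. f K - DeltaP a K" K1 0 M, OF gK1 gM M1(1) cont] by blast
  have ex: "\<exists>!K. K \<ge> K1 \<and> f K = DeltaP a K"
  proof (rule ex1I[of _ K0])
    show "K0 \<ge> K1 \<and> f K0 = DeltaP a K0" using K0 by simp
    fix K assume K: "K \<ge> K1 \<and> f K = DeltaP a K"
    show "K = K0"
    proof (rule ccontr)
      assume "K \<noteq> K0"
      hence "K < K0 \<or> K > K0" by linarith
      thus False using part2[of K0 K] K K0 by auto
    qed
  qed
  show ?thesis using ex part2 unfolding f_def K1_def a_def by blast
qed

end
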